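(* Every structure over a binary signature which has bounded degree is ptp-conservative.
   Context: A binary signature consists of relation symbols of arity at most 2 and constants. A structure has bounded degree if there is $N$ such that every element occurs together with at most $N$ other elements in binary atoms. Positive types: for a structure $\mathcal C$ over signature $\Theta$, $e\in\mathcal C$, $n\in\mathbb N$, $ptp_n(\mathcal C,e,\Theta)$ is the set of conjunctive queries $\Psi(\bar x,y)$ with $|\bar x|<n$ over relations and constants of $\Theta$ (equality atoms $x=c$ allowed) with $\mathcal C\models\exists\bar x\Psi(\bar x,e)$; $d\equiv_n e$ iff their positive $n$-types coincide; $M_n^\Theta(\mathcal C)$ is the quotient $\mathcal C/\equiv_n$ where a tuple of classes is in $R$ iff some representatives are; $q_n$ is the quotient map. Colors are unary predicates $K^l_h$. A coloring of $\mathcal C$ (over $\Sigma$) is a structure $\bar{\mathcal C}$ over a finite signature $\bar\Sigma$ with $\Sigma\subseteq\bar\Sigma\subseteq\Sigma\cup\{K^l_h\}$, restricting to $\mathcal C$ on $\Sigma$, in which each element satisfies exactly one color. $\bar{\mathcal C}$ is $n$-conservative up to size $m$ if $ptp_m(\mathcal C,e,\Sigma)=ptp_m(M^{\bar\Sigma}_n(\bar{\mathcal C}),q_n(e),\Sigma)$ for every $e\in\mathcal C$. $\mathcal C$ is ptp-conservative if for every $m$ there exist $n$ and a coloring of $\mathcal C$ which is $n$-conservative up to size $m$. *)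

theory Defs
  imports Main
begin

record ('r, 'c) sgn =
  rels :: "'r set"
  sconsts :: "'c set"
  arity :: "'r \<Rightarrow> nat"

definition binary_sig :: "('r, 'c) sgn \<Rightarrow> bool" where
  "binary_sig \<Theta> \<longleftrightarrow> (\<forall>r\<in>rels \<Theta>. arity \<Theta> r \<le> 2)"

record ('a, 'r, 'c) struct =
  sdom :: "'a set"
  rel :: "'r \<Rightarrow> 'a list set"
  cst :: "'c \<Rightarrow> 'a"

definition wf_struct :: "('r, 'c) sgn \<Rightarrow> ('a, 'r, 'c) struct \<Rightarrow> bool" where
  "wf_struct \<Theta> M \<longleftrightarrow> sdom M \<noteq> {}
     \<and> (\<forall>c\<in>sconsts \<Theta>. cst M c \<in> sdom M)
     \<and> (\<forall>r\<in>rels \<Theta>. \<forall>ts\<in>rel M r. length ts = arity \<Theta> r \<and> set ts \<subseteq> sdom M)"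

definition neighbours :: "('r, 'c) sgn \<Rightarrow> ('a, 'r, 'c) struct \<Rightarrow> 'a \<Rightarrow> 'a set" where
  "neighbours \<Theta> M a = {b. b \<noteq> a \<and> (\<exists>r\<in>rels \<Theta>. [a, b] \<in> rel M r \<or> [b, a] \<in> rel M r)}"

definition bounded_degree :: "('r, 'c) sgn \<Rightarrow> ('a, 'r, 'c) struct \<Rightarrow> bool" where
  "bounded_degree \<Theta> M \<longleftrightarrow>
     (\<exists>N::nat. \<forall>a\<in>sdom M. finite (neighbours \<Theta> M a) \<and> card (neighbours \<Theta> M a) \<le> N)"

text \<open>Terms: variables (V 0 is the distinguished free variable y, V 1, ..., V k are the
  existentially quantified variables x-bar) or constants.\<close>
datatype 'c trm = V nat | C 'c

datatype ('r, 'c) atom = RelA 'r "'c trm list" | EqA nat 'c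

text \<open>A conjunctive query \<Psi>(x_1..x_k, y) is a pair (k, list of atoms).\<close>
type_synonym ('r, 'c) cq = "nat \<times> ('r, 'c) atom list"

fun wf_trm :: "('r, 'c) sgn \<Rightarrow> nat \<Rightarrow> 'c trm \<Rightarrow> bool" where
  "wf_trm \<Theta> k (V i) = (i \<le> k)"
| "wf_trm \<Theta> k (C c) = (c \<in> sconsts \<Theta>)"

fun wf_atom :: "('r, 'c) sgn \<Rightarrow> nat \<Rightarrow> ('r, 'c) atom \<Rightarrow> bool" where
  "wf_atom \<Theta> k (RelA r ts) =
     (r \<in> rels \<Theta> \<and> length ts = arity \<Theta> r \<and> (\<forall>t\<in>set ts. wf_trm \<Theta> k t))"
| "wf_atom \<Theta> k (EqA i c) = (i \<le> k \<and> c \<in> sconsts \<Theta>)"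

fun eval_trm :: "('a, 'r, 'c) struct \<Rightarrow> (nat \<Rightarrow> 'a) \<Rightarrow> 'c trm \<Rightarrow> 'a" where
  "eval_trm M v (V i) = v i"
| "eval_trm M v (C c) = cst M c"

fun holds_atom :: "('a, 'r, 'c) struct \<Rightarrow> (nat \<Rightarrow> 'a) \<Rightarrow> ('r, 'c) atom \<Rightarrow> bool" where
  "holds_atom M v (RelA r ts) = (map (eval_trm M v) ts \<in> rel M r)"
| "holds_atom M v (EqA i c) = (v i = cst M c)"

definition ptp :: "nat \<Rightarrow> ('a, 'r, 'c) struct \<Rightarrow> 'a \<Rightarrow> ('r, 'c) sgn \<Rightarrow> ('r, 'c) cq set" where
  "ptp n M e \<Theta> = {(k, as). k < n \<and> (\<forall>a\<in>set as. wf_atom \<Theta> k a) \<and>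
      (\<exists>v. v 0 = e \<and> (\<forall>i\<in>{1..k}. v i \<in> sdom M) \<and> (\<forall>a\<in>set as. holds_atom M v a))}"

definition ptp_equiv :: "nat \<Rightarrow> ('r, 'c) sgn \<Rightarrow> ('a, 'r, 'c) struct \<Rightarrow> 'a \<Rightarrow> 'a \<Rightarrow> bool" where
  "ptp_equiv n \<Theta> M d e \<longleftrightarrow> ptp n M d \<Theta> = ptp n M e \<Theta>"

definition qmap :: "nat \<Rightarrow> ('r, 'c) sgn \<Rightarrow> ('a, 'r, 'c) struct \<Rightarrow> 'a \<Rightarrow> 'a set" where
  "qmap n \<Theta> M e = {d\<in>sdom M. ptp_equiv n \<Theta> M d e}"

definition quot :: "nat \<Rightarrow> ('r, 'c) sgn \<Rightarrow> ('a, 'r, 'c) struct \<Rightarrow> ('a set, 'r, 'c) struct" where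
  "quot n \<Theta> M =
     \<lparr> sdom = qmap n \<Theta> M ` sdom M,
       rel = (\<lambda>r. {Xs. (\<forall>X\<in>set Xs. X \<in> qmap n \<Theta> M ` sdom M) \<and>
                     (\<exists>ds. length ds = length Xs \<and> ds \<in> rel M r \<and>
                          (\<forall>i<length ds. ds ! i \<in> Xs ! i))}),
       cst = (\<lambda>c. qmap n \<Theta> M (cst M c)) \<rparr>"

datatype 'r csym = Base 'r | Color nat nat

definition colsig :: "('r, 'c) sgn \<Rightarrow> (nat \<times> nat) set \<Rightarrow> ('r csym, 'c) sgn" where
  "colsig \<Sigma> K =
     \<lparr> rels = Base ` rels \<Sigma> \<union> (\<lambda>(l, h). Color l h) ` K,
       sconsts = sconsts \<Sigma>,
       arity = (\<lambda>s. case s of Base r \<Rightarrow> arity \<Sigma> r | Color _ _ \<Rightarrow> 1) \<rparr>"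

definition reduct :: "('a, 'r csym, 'c) struct \<Rightarrow> ('a, 'r, 'c) struct" where
  "reduct M = \<lparr> sdom = sdom M, rel = (\<lambda>r. rel M (Base r)), cst = cst M \<rparr>"

definition is_coloring ::
  "('r, 'c) sgn \<Rightarrow> ('a, 'r, 'c) struct \<Rightarrow> (nat \<times> nat) set \<Rightarrow> ('a, 'r csym, 'c) struct \<Rightarrow> bool" where
  "is_coloring \<Sigma> M K Mb \<longleftrightarrow>
     finite K \<and> wf_struct (colsig \<Sigma> K) Mb \<and>
     sdom Mb = sdom M \<and>
     (\<forall>r\<in>rels \<Sigma>. rel Mb (Base r) = rel M r) \<and>
     (\<forall>c\<in>sconsts \<Sigma>. cst Mb c = cst M c) \<and>
     (\<forall>a\<in>sdom Mb. \<exists>!lh\<in>K. [a] \<in> rel Mb (Color (fst lh) (snd lh)))"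

definition conservative_upto ::
  "('r, 'c) sgn \<Rightarrow> ('a, 'r, 'c) struct \<Rightarrow> (nat \<times> nat) set \<Rightarrow> ('a, 'r csym, 'c) struct
     \<Rightarrow> nat \<Rightarrow> nat \<Rightarrow> bool" where
  "conservative_upto \<Sigma> M K Mb n m \<longleftrightarrow>
     (\<forall>e\<in>sdom M. ptp m M e \<Sigma> =
        ptp m (reduct (quot n (colsig \<Sigma> K) Mb)) (qmap n (colsig \<Sigma> K) Mb e) \<Sigma>)"

definition ptp_conservative :: "('r, 'c) sgn \<Rightarrow> ('a, 'r, 'c) struct \<Rightarrow> bool" where
  "ptp_conservative \<Sigma> M \<longleftrightarrow>
     (\<forall>m. \<exists>n K Mb. is_coloring \<Sigma> M K Mb \<and> conservative_upto \<Sigma> M K Mb n m)"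

end

theory Submission
  imports Defs
begin


definition Eg :: "('r,'c) sgn \<Rightarrow> ('a,'r,'c) struct \<Rightarrow> ('a\<times>'a) set" where
  "Eg S M = {(a,b). a \<in> sdom M \<and> (b = a \<or> b \<in> neighbours S M a)}"

definition ball :: "('r,'c) sgn \<Rightarrow> ('a,'r,'c) struct \<Rightarrow> nat \<Rightarrow> 'a \<Rightarrow> 'a set" where
  "ball S M j a = (Eg S M ^^ j) `` {a}"

lemma nb_sdom:
  assumes "wf_struct S M" "b \<in> neighbours S M a"
  shows "b \<in> sdom M"
  using assms unfolding wf_struct_def neighbours_def by fastforce

lemma Eg_sdom: "wf_struct S M \<Longrightarrow> (a,b) \<in> Eg S M \<Longrightarrow> b \<in> sdom M"
  unfolding Eg_def using nb_sdom by fastforce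

lemma Eg_sym: "wf_struct S M \<Longrightarrow> (a,b) \<in> Eg S M \<Longrightarrow> (b,a) \<in> Eg S M"
  using Eg_sdom[of S M a b] unfolding Eg_def neighbours_def by auto

lemma relpow_sym_Eg: "wf_struct S M \<Longrightarrow> (a,b) \<in> Eg S M ^^ j \<Longrightarrow> (b,a) \<in> Eg S M ^^ j"
proof (induction j arbitrary: a b)
  case 0 then show ?case by simp
next
  case (Suc j)
  then obtain y where "(a,y) \<in> Eg S M ^^ j" "(y,b) \<in> Eg S M" by auto
  with Suc show ?case using Eg_sym relpow_Suc_I2 by metis
qed

lemma ball_sym: "wf_struct S M \<Longrightarrow> b \<in> ball S M j a \<Longrightarrow> a \<in> ball S M j b"
  unfolding ball_def using relpow_sym_Eg by fastforce

lemma ball_trans: "b \<in> ball S M i a \<Longrightarrow> d \<in> ball S M j b \<Longrightarrow> d \<in> ball S M (i+j) a"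
  unfolding ball_def by (auto simp: relpow_add)

lemma ball_sdom: "wf_struct S M \<Longrightarrow> a \<in> sdom M \<Longrightarrow> b \<in> ball S M j a \<Longrightarrow> b \<in> sdom M"
proof (induction j arbitrary: b)
  case 0 then show ?case by (simp add: ball_def)
next
  case (Suc j)
  then show ?case unfolding ball_def using Eg_sdom by (metis Image_singleton_iff relpow_Suc_E)
qed

lemma ball_refl: "a \<in> sdom M \<Longrightarrow> a \<in> ball S M j a"
proof (induction j)
  case 0 then show ?case by (simp add: ball_def)
next
  case (Suc j)
  then show ?case unfolding ball_def Eg_def by auto
qed

lemma ball_mono: "wf_struct S M \<Longrightarrow> a \<in> sdom M \<Longrightarrow> i \<le> j \<Longrightarrow> b \<in> ball S M i a \<Longrightarrow> b \<in> ball S M j a"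
  using ball_trans[of b S M i a b "j-i"] ball_refl[of b M S "j-i"] ball_sdom by fastforce

lemma ball_0[simp]: "ball S M 0 a = {a}"
  by (simp add: ball_def)

lemma ball_Suc: "ball S M (Suc j) a = (\<Union>b\<in>ball S M j a. Eg S M `` {b})"
  unfolding ball_def by auto

lemma Eg_img: "Eg S M `` {b} \<subseteq> insert b (neighbours S M b)"
  unfolding Eg_def by auto

lemma ball_card:
  assumes bd: "\<forall>a\<in>sdom M. finite (neighbours S M a) \<and> card (neighbours S M a) \<le> N"
  shows "finite (ball S M j a) \<and> card (ball S M j a) \<le> (N+1)^j"
proof (induction j)
  case 0 then show ?case by simp
next
  case (Suc j)
  have fb: "\<And>b. finite (Eg S M `` {b}) \<and> card (Eg S M `` {b}) \<le> N+1"
  proof -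
    fix b
    show "finite (Eg S M `` {b}) \<and> card (Eg S M `` {b}) \<le> N+1"
    proof (cases "b \<in> sdom M")
      case True
      then have f: "finite (insert b (neighbours S M b))" "card (insert b (neighbours S M b)) \<le> N+1"
        using bd by (auto intro: order_trans[OF card_insert_le_m1] simp: card_insert_if)
      then show ?thesis using Eg_img[of S M b] by (meson card_mono finite_subset order_trans)
    next
      case False
      then have "Eg S M `` {b} = {}" unfolding Eg_def by auto
      then show ?thesis by simp
    qed
  qed
  have "card (ball S M (Suc j) a) \<le> (\<Sum>b\<in>ball S M j a. card (Eg S M `` {b}))"
    unfolding ball_Suc using Suc card_UN_le by blast
  also have "\<dots> \<le> card (ball S M j a) * (N+1)"
    using fb sum_bounded_above[of "ball S M j a" "\<lambda>b. card (Eg S M `` {b})" "N+1"] by auto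
  also have "\<dots> \<le> (N+1)^j * (N+1)" using Suc by (intro mult_right_mono) auto
  finally show ?case using Suc fb unfolding ball_Suc by (auto simp: mult.commute)
qed

lemma colouring_exists:
  assumes wf: "wf_struct S M"
    and bd: "\<forall>a\<in>sdom M. finite (neighbours S M a) \<and> card (neighbours S M a) \<le> N"
  shows "\<exists>c::'a \<Rightarrow> nat. (\<forall>a\<in>sdom M. c a \<le> (N+1)^L) \<and>
           (\<forall>a\<in>sdom M. \<forall>b\<in>ball S M L a. a \<noteq> b \<longrightarrow> c a \<noteq> c b)"
proof -
  define B where "B = (N+1)^L"
  define A where "A = {G. G \<subseteq> sdom M \<times> {0..B} \<and> (\<forall>a x y. (a,x)\<in>G \<longrightarrow> (a,y)\<in>G \<longrightarrow> x = y)
     \<and> (\<forall>a b x y. (a,x)\<in>G \<longrightarrow> (b,y)\<in>G \<longrightarrow> b \<in> ball S M L a \<longrightarrow> a \<noteq> b \<longrightarrow> x \<noteq> y)}"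
  have "\<forall>C\<in>chains A. \<exists>U\<in>A. \<forall>X\<in>C. X \<subseteq> U"
  proof
    fix C assume C: "C \<in> chains A"
    have ch: "\<And>X Y. X\<in>C \<Longrightarrow> Y\<in>C \<Longrightarrow> X \<subseteq> Y \<or> Y \<subseteq> X" "C \<subseteq> A"
      using C unfolding chains_def chain_subset_def by auto
    have mem: "\<And>X. X \<in> C \<Longrightarrow> X \<subseteq> sdom M \<times> {0..B} \<and> (\<forall>a x y. (a,x)\<in>X \<longrightarrow> (a,y)\<in>X \<longrightarrow> x = y)
     \<and> (\<forall>a b x y. (a,x)\<in>X \<longrightarrow> (b,y)\<in>X \<longrightarrow> b \<in> ball S M L a \<longrightarrow> a \<noteq> b \<longrightarrow> x \<noteq> y)"
      using ch(2) unfolding A_def by blast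
    have two: "\<exists>Z\<in>C. p \<in> Z \<and> q \<in> Z" if pq: "p \<in> \<Union>C" "q \<in> \<Union>C" for p q
    proof -
      obtain X where X: "X\<in>C" "p\<in>X" using pq(1) by blast
      obtain Y where Y: "Y\<in>C" "q\<in>Y" using pq(2) by blast
      note XY = X(1) Y(1) X(2) Y(2)
      show ?thesis using ch(1)[OF XY(1,2)] XY by blast
    qed
    have "\<Union>C \<in> A"
      unfolding A_def
    proof (intro CollectI conjI allI impI)
      show "\<Union>C \<subseteq> sdom M \<times> {0..B}" using mem by blast
    next
      fix a x y assume "(a,x) \<in> \<Union>C" "(a,y) \<in> \<Union>C"
      then obtain Z where "Z\<in>C" "(a,x)\<in>Z" "(a,y)\<in>Z" using two by blast
      then show "x = y" using mem by blast
    next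
      fix a b x y assume h: "(a,x) \<in> \<Union>C" "(b,y) \<in> \<Union>C" "b \<in> ball S M L a" "a \<noteq> b"
      then obtain Z where "Z\<in>C" "(a,x)\<in>Z" "(b,y)\<in>Z" using two by blast
      then show "x \<noteq> y" using mem h(3,4) by blast
    qed
    then show "\<exists>U\<in>A. \<forall>X\<in>C. X \<subseteq> U" by blast
  qed
  from Zorn_Lemma2[OF this] obtain G where G: "G \<in> A" and max: "\<forall>X\<in>A. G \<subseteq> X \<longrightarrow> X = G"
    by blast
  have GA: "G \<subseteq> sdom M \<times> {0..B}" "\<And>a x y. (a,x)\<in>G \<Longrightarrow> (a,y)\<in>G \<Longrightarrow> x = y"
    "\<And>a b x y. (a,x)\<in>G \<Longrightarrow> (b,y)\<in>G \<Longrightarrow> b \<in> ball S M L a \<Longrightarrow> a \<noteq> b \<Longrightarrow> x \<noteq> y"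
    using G unfolding A_def by blast+
  have dom: "\<exists>x. (a,x) \<in> G" if a: "a \<in> sdom M" for a
  proof (rule ccontr)
    assume na: "\<nexists>x. (a,x) \<in> G"
    define f where "f b = (THE x. (b,x) \<in> G)" for b
    have fG: "(b,x) \<in> G \<Longrightarrow> f b = x" for b x unfolding f_def using GA(2) by blast
    define used where "used = f ` (ball S M L a - {a})"
    have fin: "finite (ball S M L a)" "card (ball S M L a) \<le> B"
      using ball_card[OF bd] unfolding B_def by auto
    have "a \<in> ball S M L a" using ball_refl a by metis
    then have "card (ball S M L a - {a}) < B + 1" using fin by (simp add: card_Diff_singleton)
    then have "card used < card {0..B}" unfolding used_def
      using card_image_le[of "ball S M L a - {a}" f] fin by simp
    moreover have "finite used" unfolding used_def using fin by simp
    ultimately have "\<not> {0..B} \<subseteq> used" using card_mono by (metis not_le)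
    then obtain x where x: "x \<in> {0..B}" "x \<notin> used" by blast
    have "insert (a,x) G \<in> A" unfolding A_def
    proof (intro CollectI conjI allI impI)
      show "insert (a,x) G \<subseteq> sdom M \<times> {0..B}" using GA(1) a x by auto
    next
      fix a' y z assume "(a',y) \<in> insert (a,x) G" "(a',z) \<in> insert (a,x) G"
      then show "y = z" using na GA(2) by blast
    next
      fix a1 b y z assume h: "(a1,y) \<in> insert (a,x) G" "(b,z) \<in> insert (a,x) G"
        "b \<in> ball S M L a1" "a1 \<noteq> b"
      show "y \<noteq> z"
      proof (cases "a1 = a")
        case True
        then have "(b,z) \<in> G" using h by auto
        then have "z \<in> used" using h True fG unfolding used_def by force
        then show ?thesis using x True h na by auto
      next
        case False
        note F = False
        show ?thesis
        proof (cases "b = a")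
          case True
          then have "(a1,y) \<in> G" using h F by auto
          moreover have "a1 \<in> ball S M L a" using ball_sym[OF wf] h True by metis
          ultimately have "y \<in> used" using h True fG unfolding used_def by force
          then show ?thesis using x True h na by auto
        next
          case False
          then show ?thesis using h F GA(3) by auto
        qed
      qed
    qed
    then have "insert (a,x) G = G" using max by blast
    then show False using na by auto
  qed
  define c where "c a = (THE x. (a,x) \<in> G)" for a
  have cG: "a \<in> sdom M \<Longrightarrow> (a, c a) \<in> G" for a
    unfolding c_def using dom GA(2) by (metis theI)
  show ?thesis
  proof (rule exI[of _ c], intro conjI ballI impI)
    fix a assume "a \<in> sdom M" then show "c a \<le> (N+1)^L" using cG[of a] GA(1) unfolding B_def by auto
  next
    fix a b assume "a \<in> sdom M" "b \<in> ball S M L a" "a \<noteq> b"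
    moreover have "b \<in> sdom M" using ball_sdom wf calculation by metis
    ultimately show "c a \<noteq> c b" using cG GA(3) by blast
  qed
qed



definition Kset :: "nat \<Rightarrow> (nat \<times> nat) set" where "Kset B = {0::nat} \<times> {0..B}"

definition mkcol :: "('a,'r,'c) struct \<Rightarrow> ('a \<Rightarrow> nat) \<Rightarrow> ('a, 'r csym, 'c) struct" where
  "mkcol M c = \<lparr>sdom = sdom M,
     rel = (\<lambda>s. case s of Base r \<Rightarrow> rel M r | Color l h \<Rightarrow> {[a] | a. a \<in> sdom M \<and> l = 0 \<and> c a = h}),
     cst = cst M\<rparr>"

lemma mkcol_simps[simp]: "sdom (mkcol M c) = sdom M" "rel (mkcol M c) (Base r) = rel M r"
  "rel (mkcol M c) (Color l h) = {[a] | a. a \<in> sdom M \<and> l = 0 \<and> c a = h}"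
  "cst (mkcol M c) = cst M"
  by (auto simp: mkcol_def)

lemma colsig_simps[simp]: "rels (colsig S K) = Base ` rels S \<union> (\<lambda>(l, h). Color l h) ` K"
  "sconsts (colsig S K) = sconsts S" "arity (colsig S K) (Base r) = arity S r"
  "arity (colsig S K) (Color l h) = 1"
  by (auto simp: colsig_def)

lemma mkcol_coloring:
  assumes wf: "wf_struct S M" and cb: "\<forall>a\<in>sdom M. c a \<le> B"
  shows "is_coloring S M (Kset B) (mkcol M c)"
  unfolding is_coloring_def
proof (intro conjI)
  show "finite (Kset B)" by (simp add: Kset_def)
  show "wf_struct (colsig S (Kset B)) (mkcol M c)"
    using wf unfolding wf_struct_def by (auto simp: Kset_def; blast)
  show "\<forall>a\<in>sdom (mkcol M c). \<exists>!lh\<in>Kset B. [a] \<in> rel (mkcol M c) (Color (fst lh) (snd lh))"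
  proof
    fix a assume a: "a \<in> sdom (mkcol M c)"
    show "\<exists>!lh\<in>Kset B. [a] \<in> rel (mkcol M c) (Color (fst lh) (snd lh))"
    proof (rule ex1I[of _ "(0, c a)"])
      show "(0, c a) \<in> Kset B \<and> [a] \<in> rel (mkcol M c) (Color (fst (0, c a)) (snd (0, c a)))"
        using a cb by (auto simp: Kset_def)
    next
      fix lh assume "lh \<in> Kset B \<and> [a] \<in> rel (mkcol M c) (Color (fst lh) (snd lh))"
      then show "lh = (0, c a)" by (cases lh) (auto simp: Kset_def)
    qed
  qed
qed auto

lemma eval_cong: "wf_trm \<Theta> k t \<Longrightarrow> (\<forall>i\<le>k. v i = v' i) \<Longrightarrow> eval_trm M v t = eval_trm M v' t"
  by (cases t) auto

lemma holds_cong: "wf_atom \<Theta> k at \<Longrightarrow> (\<forall>i\<le>k. v i = v' i) \<Longrightarrow> holds_atom M v at = holds_atom M v' at"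
proof (cases at)
  case (RelA r ts)
  assume a: "wf_atom \<Theta> k at" "\<forall>i\<le>k. v i = v' i"
  have "\<forall>x\<in>set ts. eval_trm M v x = eval_trm M v' x"
    using a RelA eval_cong[of \<Theta> k _ v v' M] by auto
  then have "map (eval_trm M v) ts = map (eval_trm M v') ts" by (intro map_cong) auto
  then show ?thesis using RelA by (simp only: holds_atom.simps)
qed auto

lemma ptp_restrict:
  assumes "t \<le> n" "ptp n M a \<Theta> = ptp n M b \<Theta>"
  shows "ptp t M a \<Theta> = ptp t M b \<Theta>"
proof -
  have "ptp t M x \<Theta> = {p \<in> ptp n M x \<Theta>. fst p < t}" for x
    using assms(1) unfolding ptp_def by auto
  then show ?thesis using assms(2) by simp
qed

lemma ptpI: "k < t \<Longrightarrow> \<forall>at\<in>set as. wf_atom \<Theta> k at \<Longrightarrow> v 0 = e \<Longrightarrow> \<forall>i\<in>{1..k}. v i \<in> sdom M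
   \<Longrightarrow> \<forall>at\<in>set as. holds_atom M v at \<Longrightarrow> (k,as) \<in> ptp t M e \<Theta>"
  unfolding ptp_def by blast

lemma ptpE: "(k,as) \<in> ptp t M e \<Theta> \<Longrightarrow> k < t \<and> (\<forall>at\<in>set as. wf_atom \<Theta> k at) \<and>
   (\<exists>v. v 0 = e \<and> (\<forall>i\<in>{1..k}. v i \<in> sdom M) \<and> (\<forall>at\<in>set as. holds_atom M v at))"
  unfolding ptp_def by blast

lemma ptp0_transfer:
  assumes "ptp t M a \<Theta> = ptp t M b \<Theta>" "0 < t"
    "\<forall>at\<in>set as. wf_atom \<Theta> 0 at" "\<forall>at\<in>set as. holds_atom M (\<lambda>_. a) at"
  shows "\<forall>at\<in>set as. holds_atom M (\<lambda>_. b) at"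
proof -
  have "(0, as) \<in> ptp t M a \<Theta>" by (rule ptpI[of _ _ _ _ "\<lambda>_. a"]) (use assms in auto)
  then have "(0, as) \<in> ptp t M b \<Theta>" using assms(1) by simp
  then obtain v where "v 0 = b" "\<forall>at\<in>set as. holds_atom M v at" by (blast dest: ptpE)
  then show ?thesis using assms(3) holds_cong[of \<Theta> 0 _ v "\<lambda>_. b" M] by auto
qed

definition rr :: "bool \<Rightarrow> 'x \<Rightarrow> 'x \<Rightarrow> 'x list" where "rr d x y = (if d then [x,y] else [y,x])"

lemma map_rr[simp]: "map f (rr d x y) = rr d (f x) (f y)" by (simp add: rr_def)
lemma set_rr[simp]: "set (rr d x y) = {x,y}" by (auto simp: rr_def)
lemma length_rr[simp]: "length (rr d x y) = 2" by (simp add: rr_def)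

fun shT :: "'c trm \<Rightarrow> 'c trm" where "shT (V i) = V (Suc i)" | "shT (C c) = C c"
fun shA :: "('r,'c) atom \<Rightarrow> ('r,'c) atom" where
  "shA (RelA r ts) = RelA r (map shT ts)" | "shA (EqA i c) = EqA (Suc i) c"

lemma wf_shT: "wf_trm \<Theta> k t \<Longrightarrow> wf_trm \<Theta> (Suc k) (shT t)" by (cases t) auto
lemma wf_shA: "wf_atom \<Theta> k at \<Longrightarrow> wf_atom \<Theta> (Suc k) (shA at)"
  by (cases at) (auto simp: wf_shT)
lemma eval_shT: "eval_trm M v (shT t) = eval_trm M (v \<circ> Suc) t" by (cases t) auto
lemma holds_shA: "holds_atom M v (shA at) = holds_atom M (v \<circ> Suc) at"
  by (cases at) (auto simp: eval_shT comp_def)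

lemma rr_ball:
  assumes wf: "wf_struct S M" and "r \<in> rels S" "rr d a w \<in> rel M r" "a \<in> sdom M"
  shows "w \<in> ball S M 1 a \<and> w \<in> sdom M"
proof -
  have ws: "w \<in> sdom M" using assms unfolding wf_struct_def by (metis insert_subset set_rr)
  have "w = a \<or> w \<in> neighbours S M a" using assms unfolding neighbours_def rr_def
    by (cases d) auto
  then have "(a,w) \<in> Eg S M" using assms(4) unfolding Eg_def by auto
  then show ?thesis using ws unfolding ball_def by auto
qed

lemma arity_rr:
  assumes wf: "wf_struct S M" and "r \<in> rels S" "rr d a w \<in> rel M r"
  shows "arity S r = 2"
  using assms unfolding wf_struct_def by (metis length_rr)

context
  fixes S :: "('r,'c) sgn" and M :: "('a,'r,'c) struct" and c :: "'a \<Rightarrow> nat" and B L :: nat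
  assumes wf: "wf_struct S M" and cb: "\<forall>a\<in>sdom M. c a \<le> B"
    and cinj: "\<forall>a\<in>sdom M. \<forall>b\<in>ball S M L a. a \<noteq> b \<longrightarrow> c a \<noteq> c b"
    and L2: "2 \<le> L"
begin

lemma inj_close:
  assumes "a \<in> sdom M" "x \<in> ball S M i a" "y \<in> ball S M j a" "i + j \<le> L" "c x = c y"
  shows "x = y"
proof -
  have xs: "x \<in> sdom M" using ball_sdom wf assms by metis
  have "a \<in> ball S M i x" using ball_sym wf assms by metis
  then have "y \<in> ball S M (i+j) x" using ball_trans assms by metis
  then have "y \<in> ball S M L x" using ball_mono[OF wf xs assms(4)] by blast
  then show ?thesis using cinj xs assms(5) by metis
qed

lemma colour_eq:
  assumes "ptp t (mkcol M c) a (colsig S (Kset B)) = ptp t (mkcol M c) b (colsig S (Kset B))"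
    "0 < t" "a \<in> sdom M"
  shows "c a = c b"
proof -
  have "\<forall>at\<in>set [RelA (Color 0 (c a)) [V 0]]. holds_atom (mkcol M c) (\<lambda>_. b) at"
    apply (rule ptp0_transfer[OF assms(1,2)])
    using assms cb by (auto simp: Kset_def)
  then show ?thesis by auto
qed

lemma exist_step:
  assumes eq: "ptp t (mkcol M c) a (colsig S (Kset B)) = ptp t (mkcol M c) a' (colsig S (Kset B))"
    and t: "2 \<le> t" and r: "r \<in> rels S" and rel: "rr d a' w' \<in> rel M r" and a': "a' \<in> sdom M"
  shows "\<exists>w. rr d a w \<in> rel M r \<and> c w = c w'"
proof -
  have w': "w' \<in> sdom M" using rr_ball[OF wf r rel a'] by blast
  have ar: "arity S r = 2" using arity_rr[OF wf r rel] .
  have "(1, [RelA (Base r) (rr d (V 0) (V 1)), RelA (Color 0 (c w')) [V 1]]) \<in> ptp t (mkcol M c) a' (colsig S (Kset B))"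
    apply (rule ptpI[of _ _ _ _ "\<lambda>i. if i = 0 then a' else w'"])
    using t r ar cb w' rel by (auto simp: Kset_def)
  then have "(1, [RelA (Base r) (rr d (V 0) (V 1)), RelA (Color 0 (c w')) [V 1]]) \<in> ptp t (mkcol M c) a (colsig S (Kset B))" using eq by simp
  then obtain v where "v 0 = a" "rr d a (v (Suc 0)) \<in> rel M r" "c (v (Suc 0)) = c w'"
    by (auto dest!: ptpE)
  then show ?thesis by blast
qed

lemma unique_step:
  assumes eq: "ptp t (mkcol M c) a (colsig S (Kset B)) = ptp t (mkcol M c) a' (colsig S (Kset B))"
    and t: "2 \<le> t" and r: "r \<in> rels S" and rel: "rr d a w \<in> rel M r" and rel': "rr d a' w' \<in> rel M r"
    and col: "c w = c w'" and a: "a \<in> sdom M" and a': "a' \<in> sdom M"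
  shows "ptp (t-1) (mkcol M c) w (colsig S (Kset B)) \<subseteq> ptp (t-1) (mkcol M c) w' (colsig S (Kset B))"
proof
  fix p assume p: "p \<in> ptp (t-1) (mkcol M c) w (colsig S (Kset B))"
  obtain k' as' where pk: "p = (k', as')" by (cases p)
  have w: "w \<in> sdom M" using rr_ball[OF wf r rel a] by blast
  have ar: "arity S r = 2" using arity_rr[OF wf r rel] .
  from p pk obtain vp where k': "k' < t - 1" and wfa: "\<forall>at\<in>set as'. wf_atom (colsig S (Kset B)) k' at"
    and vp0: "vp 0 = w" and vpd: "\<forall>i\<in>{1..k'}. vp i \<in> sdom M"
    and hp: "\<forall>at\<in>set as'. holds_atom (mkcol M c) vp at"
    unfolding ptp_def by auto
  define Q where "Q = (Suc k', RelA (Base r) (rr d (V 0) (V 1)) # RelA (Color 0 (c w)) [V 1] # map shA as')"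
  define v where "v i = (if i = 0 then a else vp (i - 1))" for i
  have vs: "v \<circ> Suc = vp" unfolding v_def by auto
  have vd: "\<forall>i\<in>{1..Suc k'}. v i \<in> sdom M"
  proof
    fix i assume i: "i \<in> {1..Suc k'}"
    show "v i \<in> sdom M"
    proof (cases "i = 1")
      case True then show ?thesis using vp0 w by (simp add: v_def)
    next
      case False
      then have "i - 1 \<in> {1..k'}" using i by auto
      then show ?thesis using False vpd a by (simp add: v_def)
    qed
  qed
  have "Q \<in> ptp t (mkcol M c) a (colsig S (Kset B))"
    unfolding Q_def
  proof (rule ptpI[of _ _ _ _ v])
    show "Suc k' < t" using k' by simp
    show "\<forall>at\<in>set (RelA (Base r) (rr d (V 0) (V 1)) # RelA (Color 0 (c w)) [V 1] # map shA as').
        wf_atom (colsig S (Kset B)) (Suc k') at"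
      using r ar cb w wfa wf_shA by (force simp: Kset_def)
    show "v 0 = a" by (simp add: v_def)
    show "\<forall>i\<in>{1..Suc k'}. v i \<in> sdom (mkcol M c)" using vd by simp
    have "\<forall>x\<in>set as'. holds_atom (mkcol M c) v (shA x)" using hp vs holds_shA by metis
    then show "\<forall>at\<in>set (RelA (Base r) (rr d (V 0) (V 1)) # RelA (Color 0 (c w)) [V 1] # map shA as').
        holds_atom (mkcol M c) v at"
      using rel vp0 w by (auto simp: v_def)
  qed
  then have "Q \<in> ptp t (mkcol M c) a' (colsig S (Kset B))" using eq by simp
  then obtain v' where v'0: "v' 0 = a'" and v'd: "\<forall>i\<in>{1..Suc k'}. v' i \<in> sdom M"
    and h1: "rr d a' (v' 1) \<in> rel M r" and h2: "c (v' 1) = c w"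
    and h3: "\<forall>at\<in>set as'. holds_atom (mkcol M c) (v' \<circ> Suc) at"
    unfolding Q_def by (auto simp: holds_shA dest!: ptpE)
  have "v' 1 \<in> ball S M 1 a'" using rr_ball[OF wf r h1 a'] by blast
  moreover have "w' \<in> ball S M 1 a'" using rr_ball[OF wf r rel' a'] by blast
  ultimately have "v' 1 = w'" using inj_close[OF a'] h2 col L2 by (metis one_add_one)
  then show "p \<in> ptp (t-1) (mkcol M c) w' (colsig S (Kset B))"
    unfolding pk using k' wfa h3 v'd \<open>v' 1 = w'\<close>
    by (intro ptpI[of _ _ _ _ "v' \<circ> Suc"]) auto
qed

end



lemma reduct_simps[simp]: "sdom (reduct T) = sdom T" "rel (reduct T) r = rel T (Base r)" "cst (reduct T) = cst T"
  by (auto simp: reduct_def)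

lemma quot_simps: "sdom (quot n S M) = qmap n S M ` sdom M"
  "rel (quot n S M) s = {Xs. (\<forall>X\<in>set Xs. X \<in> qmap n S M ` sdom M) \<and>
                     (\<exists>ds. length ds = length Xs \<and> ds \<in> rel M s \<and> (\<forall>i<length ds. ds ! i \<in> Xs ! i))}"
  "cst (quot n S M) = (\<lambda>c. qmap n S M (cst M c))"
  by (auto simp: quot_def)

context
  fixes S :: "('r,'c) sgn" and M :: "('a,'r,'c) struct" and c :: "'a \<Rightarrow> nat" and B D :: nat
  assumes wf: "wf_struct S M" and bin: "binary_sig S" and cb: "\<forall>a\<in>sdom M. c a \<le> B"
    and cinj: "\<forall>a\<in>sdom M. \<forall>b\<in>ball S M (2*D+2) a. a \<noteq> b \<longrightarrow> c a \<noteq> c b"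
begin

abbreviation "Sb \<equiv> colsig S (Kset B)"
abbreviation "Mb \<equiv> mkcol M c"
abbreviation "nn \<equiv> Suc (Suc D)"
abbreviation "qq \<equiv> qmap nn Sb Mb"
abbreviation "TT \<equiv> quot nn Sb Mb"

lemma L2: "2 \<le> 2*D+2" by simp

lemmas inj_close' = inj_close[OF wf cb cinj L2]
lemmas colour_eq' = colour_eq[OF wf cb cinj L2]
lemmas exist_step' = exist_step[OF wf cb cinj L2]
lemmas unique_step' = unique_step[OF wf cb cinj L2]

lemma q_mem: "d \<in> qq x \<longleftrightarrow> d \<in> sdom M \<and> ptp nn Mb d Sb = ptp nn Mb x Sb"
  by (simp add: qmap_def ptp_equiv_def)

lemma eval_Q_V[simp]: "eval_trm (reduct TT) v (V i) = v i" by simp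
lemma eval_Q_C[simp]: "eval_trm (reduct TT) v (C k) = qq (cst M k)" by (simp add: quot_simps)

lemma rel_TT_rr:
  assumes "rr d X Z \<in> rel TT (Base r)"
  shows "\<exists>x1 z1. x1 \<in> X \<and> z1 \<in> Z \<and> rr d x1 z1 \<in> rel M r"
proof -
  obtain ds where ds: "length ds = 2" "ds \<in> rel M r" "\<forall>i<2. ds ! i \<in> rr d X Z ! i"
    using assms by (auto simp: quot_simps)
  then obtain u w where uw: "ds = [u,w]"
    by (metis (no_types, lifting) One_nat_def Suc_1 length_0_conv length_Suc_conv)
  have "ds ! 0 \<in> rr d X Z ! 0" "ds ! 1 \<in> rr d X Z ! 1" using ds(3) by auto
  then have h: "u \<in> rr d X Z ! 0" "w \<in> rr d X Z ! 1" using uw by auto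
  show ?thesis
  proof (cases d)
    case True
    then show ?thesis using h ds(2) uw by (auto simp: rr_def)
  next
    case False
    then have "rr d w u = ds" using uw by (simp add: rr_def)
    then show ?thesis using h ds(2) False by (auto simp: rr_def)
  qed
qed

lemma fwd:
  assumes e: "e \<in> sdom M" and p: "p \<in> ptp m M e S"
  shows "p \<in> ptp m (reduct TT) (qq e) S"
proof -
  obtain k ats where pk: "p = (k, ats)" by (cases p)
  from p pk obtain v where k: "k < m" and wfa: "\<forall>at\<in>set ats. wf_atom S k at"
    and v0: "v 0 = e" and vd: "\<forall>i\<in>{1..k}. v i \<in> sdom M" and h: "\<forall>at\<in>set ats. holds_atom M v at"
    by (blast dest: ptpE)
  have inq: "x \<in> sdom M \<Longrightarrow> x \<in> qq x" for x by (simp add: q_mem)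
  have evs: "eval_trm M v t \<in> sdom M" if wt: "wf_trm S k t" for t
  proof (cases t)
    case (V i)
    then have "i \<le> k" using wt by simp
    then show ?thesis using V v0 e vd by (cases "i = 0") auto
  next
    case (C k')
    then show ?thesis using wt wf unfolding wf_struct_def by simp
  qed
  have evq: "eval_trm (reduct TT) (qq \<circ> v) t = qq (eval_trm M v t)" for t by (cases t) (auto simp: quot_simps)
  have hh: "holds_atom (reduct TT) (qq \<circ> v) at" if at: "at \<in> set ats" for at
  proof (cases at)
    case (RelA r ts)
    have "\<forall>t\<in>set ts. wf_trm S k t" using wfa at RelA by auto
    then have sd: "\<forall>t\<in>set ts. eval_trm M v t \<in> sdom M" using evs by blast
    have hr: "map (eval_trm M v) ts \<in> rel M r" using h at RelA by auto
    have "map (eval_trm (reduct TT) (qq \<circ> v)) ts = map qq (map (eval_trm M v) ts)" by (simp add: evq)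
    moreover have "map qq (map (eval_trm M v) ts) \<in> rel TT (Base r)"
      unfolding quot_simps using sd hr inq by (auto intro!: exI[of _ "map (eval_trm M v) ts"])
    ultimately have "map (eval_trm (reduct TT) (qq \<circ> v)) ts \<in> rel TT (Base r)" by (simp only:)
    then show ?thesis using RelA by simp
  next
    case (EqA i k')
    then show ?thesis using h at by (auto simp: quot_simps)
  qed
  have h0: "(qq \<circ> v) 0 = qq e" using v0 by simp
  have hd: "\<forall>i\<in>{1..k}. (qq \<circ> v) i \<in> sdom (reduct TT)" using vd by (simp add: quot_simps)
  show ?thesis unfolding pk by (rule ptpI[OF k wfa h0 hd]) (use hh in blast)
qed

lemma cst_cls:
  assumes k: "k' \<in> sconsts S" and d: "d \<in> qq (cst M k')"
  shows "d = cst M k'"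
proof -
  have "d \<in> sdom M" "ptp nn Mb (cst M k') Sb = ptp nn Mb d Sb" using d q_mem by auto
  then have "\<forall>at\<in>set [EqA 0 k']. holds_atom Mb (\<lambda>_. d) at"
    by (intro ptp0_transfer[of nn Mb "cst M k'" Sb d]) (use k in auto)
  then show ?thesis by simp
qed

lemma tr2:
  assumes "ptp 2 Mb a Sb = ptp 2 Mb b Sb" "wf_atom Sb 0 at" "holds_atom Mb (\<lambda>_. a) at"
  shows "holds_atom Mb (\<lambda>_. b) at"
  using ptp0_transfer[of 2 Mb a Sb b "[at]"] assms by auto

lemma bwd:
  assumes e: "e \<in> sdom M" and km: "k < m" and mD: "m*m \<le> D"
    and wfa: "\<forall>at\<in>set ats. wf_atom S k at"
    and vQ0: "vQ 0 = qq e" and vQd: "\<forall>i\<in>{1..k}. vQ i \<in> sdom (reduct TT)"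
    and hQ: "\<forall>at\<in>set ats. holds_atom (reduct TT) vQ at"
  shows "(k, ats) \<in> ptp m M e S"
proof -
  have inq: "x \<in> sdom M \<Longrightarrow> x \<in> qq x" for x by (simp add: q_mem)
  have vQd': "\<exists>b\<in>sdom M. vQ i = qq b" if "i \<le> k" for i
  proof (cases "i = 0")
    case True then show ?thesis using vQ0 e by auto
  next
    case False then have "i \<in> {1..k}" using that by auto
    then have "vQ i \<in> qq ` sdom M" using vQd by (simp add: quot_simps)
    then show ?thesis by (auto simp: image_iff)
  qed
  define base where "base i = (if i = 0 then e else (SOME b. b \<in> sdom M \<and> vQ i = qq b))" for i
  have base: "base i \<in> sdom M \<and> vQ i = qq (base i)" if "i \<le> k" for i
  proof (cases "i = 0")
    case True then show ?thesis using vQ0 e by (simp add: base_def)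
  next
    case False
    then show ?thesis unfolding base_def using someI_ex[OF vQd'[OF that, unfolded Bex_def]] by simp
  qed
  have cls: "d \<in> sdom M \<and> ptp nn Mb d Sb = ptp nn Mb (base i) Sb" if "i \<le> k" "d \<in> vQ i" for i d
    using base[OF that(1)] that(2) q_mem by auto
  define A where "A = {(i,j). \<exists>r ts. RelA r ts \<in> set ats \<and> (ts = [V i, V j] \<or> ts = [V j, V i])}"
  have Asub: "A \<subseteq> {0..k} \<times> {0..k}"
  proof
    fix x assume "x \<in> A"
    then obtain i j r ts where x: "x = (i,j)" "RelA r ts \<in> set ats" "ts = [V i, V j] \<or> ts = [V j, V i]"
      unfolding A_def by blast
    then have "wf_atom S k (RelA r ts)" using wfa by blast
    then show "x \<in> {0..k} \<times> {0..k}" using x by auto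
  qed
  have Asym: "(i,j) \<in> A \<Longrightarrow> (j,i) \<in> A" for i j unfolding A_def by blast
  have finA: "finite A" using Asub finite_subset by blast
  have "card A \<le> card ({0..k} \<times> {0..k})" using Asub by (intro card_mono) auto
  also have "\<dots> = Suc k * Suc k" by (simp add: card_cartesian_product)
  also have "\<dots> \<le> m * m" using km by (intro mult_le_mono) auto
  finally have cardA: "card A \<le> D" using mD by simp
  define root where "root i = (LEAST j. (j,i) \<in> A\<^sup>*)" for i
  have root_r: "(root i, i) \<in> A\<^sup>*" for i unfolding root_def by (rule LeastI[of _ i]) simp
  have root_le: "root i \<le> i" for i unfolding root_def by (rule Least_le) simp
  have root0: "root 0 = 0" using root_le[of 0] by simp
  have root_eq: "root i = root j" if "(i,j) \<in> A" for i j
  proof -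
    have "(x,i) \<in> A\<^sup>* \<longleftrightarrow> (x,j) \<in> A\<^sup>*" for x
    proof
      assume "(x,i) \<in> A\<^sup>*" then show "(x,j) \<in> A\<^sup>*" by (rule rtrancl.rtrancl_into_rtrancl[OF _ that])
    next
      assume "(x,j) \<in> A\<^sup>*" then show "(x,i) \<in> A\<^sup>*" by (rule rtrancl.rtrancl_into_rtrancl[OF _ Asym[OF that]])
    qed
    then show ?thesis unfolding root_def by simp
  qed
  have claim: "\<exists>a. a \<in> ball S M j (base \<rho>) \<and> a \<in> sdom M \<and> ptp (nn - j) Mb a Sb = ptp (nn - j) Mb (base i) Sb"
    if "\<rho> \<le> k" "(\<rho>, i) \<in> A^^j" "j \<le> D" "i \<le> k" for \<rho> j i
    using that
  proof (induction j arbitrary: i)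
    case 0
    then have "i = \<rho>" by simp
    then show ?case using base[OF 0(1)] by auto
  next
    case (Suc j)
    then obtain p where p: "(\<rho>, p) \<in> A^^j" "(p, i) \<in> A" by auto
    have pk: "p \<le> k" using p(2) Asub by auto
    obtain ap where ap: "ap \<in> ball S M j (base \<rho>)" "ap \<in> sdom M"
      "ptp (nn - j) Mb ap Sb = ptp (nn - j) Mb (base p) Sb"
      using Suc.IH[OF Suc.prems(1) p(1) _ pk] Suc.prems(3) by auto
    from p(2) obtain r ts where rt0: "RelA r ts \<in> set ats" "ts = [V p, V i] \<or> ts = [V i, V p]"
      unfolding A_def by blast
    have "\<exists>d. ts = rr d (V p) (V i)"
    proof (rule disjE[OF rt0(2)])
      assume "ts = [V p, V i]" then show ?thesis by (intro exI[of _ True]) (simp add: rr_def)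
    next
      assume "ts = [V i, V p]" then show ?thesis by (intro exI[of _ False]) (simp add: rr_def)
    qed
    then obtain d where "ts = rr d (V p) (V i)" by blast
    note rt = rt0(1) this
    have r: "r \<in> rels S" using wfa rt(1) by fastforce
    have "holds_atom (reduct TT) vQ (RelA r ts)" using hQ rt(1) by blast
    then have "rr d (vQ p) (vQ i) \<in> rel TT (Base r)" using rt(2) by simp
    then obtain x1 z1 where xz: "x1 \<in> vQ p" "z1 \<in> vQ i" "rr d x1 z1 \<in> rel M r"
      using rel_TT_rr by blast
    have x1: "x1 \<in> sdom M" "ptp nn Mb x1 Sb = ptp nn Mb (base p) Sb" using cls[OF pk xz(1)] by auto
    have z1: "z1 \<in> sdom M" "ptp nn Mb z1 Sb = ptp nn Mb (base i) Sb" using cls[OF Suc.prems(4) xz(2)] by auto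
    have eq1: "ptp (nn - j) Mb ap Sb = ptp (nn - j) Mb x1 Sb"
      using ap(3) ptp_restrict[of "nn - j" nn Mb x1 Sb "base p"] x1(2) by simp
    have t2: "2 \<le> nn - j" using Suc.prems(3) by simp
    obtain w where w: "rr d ap w \<in> rel M r" "c w = c z1"
      using exist_step'[OF eq1 t2 r xz(3) x1(1)] by blast
    have s1: "ptp (nn - j - 1) Mb w Sb \<subseteq> ptp (nn - j - 1) Mb z1 Sb"
      by (rule unique_step'[OF eq1 t2 r w(1) xz(3) w(2) ap(2) x1(1)])
    have s2: "ptp (nn - j - 1) Mb z1 Sb \<subseteq> ptp (nn - j - 1) Mb w Sb"
      by (rule unique_step'[OF eq1[symmetric] t2 r xz(3) w(1) w(2)[symmetric] x1(1) ap(2)])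
    have "ptp (nn - Suc j) Mb z1 Sb = ptp (nn - Suc j) Mb (base i) Sb"
      using ptp_restrict[of "nn - Suc j" nn Mb z1 Sb "base i"] z1(2) by simp
    then have eqw: "ptp (nn - Suc j) Mb w Sb = ptp (nn - Suc j) Mb (base i) Sb"
      using s1 s2 by simp
    have wb: "w \<in> ball S M 1 ap" "w \<in> sdom M" using rr_ball[OF wf r w(1) ap(2)] by auto
    have "w \<in> ball S M (Suc j) (base \<rho>)" using ball_trans[OF ap(1) wb(1)] by simp
    then show ?case using wb(2) eqw by blast
  qed
  define lift where "lift i = (THE a. a \<in> ball S M D (base (root i)) \<and> c a = c (base i))" for i
  have LP: "lift i \<in> sdom M \<and> lift i \<in> ball S M D (base (root i)) \<and> ptp 2 Mb (lift i) Sb = ptp 2 Mb (base i) Sb"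
    if i: "i \<le> k" for i
  proof -
    have "(root i, i) \<in> (\<Union>n\<in>{n. n \<le> card A}. A^^n)"
      using root_r[of i] by (simp only: rtrancl_finite_eq_relpow[OF finA])
    then obtain j0 where j0: "j0 \<le> card A" "(root i, i) \<in> A^^j0" by blast
    then have j: "j0 \<le> D" "(root i, i) \<in> A^^j0" using cardA by auto
    have rk: "root i \<le> k" using root_le[of i] i by simp
    have bs: "base (root i) \<in> sdom M" using base[OF rk] by simp
    obtain a where a: "a \<in> ball S M j0 (base (root i))" "a \<in> sdom M"
      "ptp (nn - j0) Mb a Sb = ptp (nn - j0) Mb (base i) Sb"
      using claim[OF rk j(2) j(1) i] by blast
    have a2: "ptp 2 Mb a Sb = ptp 2 Mb (base i) Sb"
      using ptp_restrict[of 2 "nn - j0" Mb a Sb "base i"] a(3) j(1) by simp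
    have aD: "a \<in> ball S M D (base (root i))" using ball_mono[OF wf bs j(1) a(1)] .
    have ac: "c a = c (base i)" using colour_eq'[OF a2 _ a(2)] by simp
    have "lift i = a" unfolding lift_def
    proof (rule the_equality)
      show "a \<in> ball S M D (base (root i)) \<and> c a = c (base i)" using aD ac by simp
    next
      fix y assume "y \<in> ball S M D (base (root i)) \<and> c y = c (base i)"
      then show "y = a" using inj_close'[OF bs _ aD, of y D] ac by auto
    qed
    then show ?thesis using a(2) aD a2 by simp
  qed
  have dcls: "d \<in> sdom M \<and> ptp 2 Mb d Sb = ptp 2 Mb (lift i) Sb" if "i \<le> k" "d \<in> vQ i" for i d
    using cls[OF that] LP[OF that(1)] ptp_restrict[of 2 nn Mb d Sb "base i"] by simp
  have lift0: "lift 0 = e"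
  proof -
    have l: "lift 0 \<in> ball S M D e" "ptp 2 Mb (lift 0) Sb = ptp 2 Mb e Sb" "lift 0 \<in> sdom M"
      using LP[of 0] root0 by (auto simp: base_def)
    have "c (lift 0) = c e" using colour_eq'[OF l(2) _ l(3)] by simp
    moreover have "e \<in> ball S M D e" using ball_refl e by metis
    ultimately show ?thesis using inj_close'[OF e l(1), of e D] by simp
  qed
  have hold: "holds_atom M lift at" if at: "at \<in> set ats" for at
  proof (cases at)
    case (EqA i k')
    then have ik: "i \<le> k" "k' \<in> sconsts S" using wfa at by auto
    have "vQ i = qq (cst M k')" using hQ at EqA by (auto simp: quot_simps)
    then have "base i = cst M k'" using cst_cls[OF ik(2)] base[OF ik(1)] inq by metis
    then have "holds_atom Mb (\<lambda>_. base i) (EqA 0 k')" by simp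
    moreover have "ptp 2 Mb (base i) Sb = ptp 2 Mb (lift i) Sb" using LP[OF ik(1)] by simp
    moreover have "wf_atom Sb 0 (EqA 0 k')" using ik by simp
    ultimately have "holds_atom Mb (\<lambda>_. lift i) (EqA 0 k')" using tr2 by blast
    then show ?thesis using EqA by simp
  next
    case (RelA r ts)
    have r: "r \<in> rels S" and lt: "length ts = arity S r" and wt: "\<forall>t\<in>set ts. wf_trm S k t"
      using wfa at RelA by auto
    have le2: "length ts \<le> 2" using bin r lt unfolding binary_sig_def by auto
    have "map (eval_trm (reduct TT) vQ) ts \<in> rel TT (Base r)" using hQ at RelA by auto
    then obtain ds where ds: "length ds = length ts" "ds \<in> rel M r"
      "\<forall>j<length ds. ds ! j \<in> eval_trm (reduct TT) vQ (ts ! j)"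
      by (auto simp: quot_simps)
    have tmC: "d = cst M k'" if "C k' \<in> set ts" "d \<in> eval_trm (reduct TT) vQ (C k')" for k' d
      using that wt cst_cls by (auto simp: quot_simps)
    have tmV: "i \<le> k \<and> d \<in> sdom M \<and> ptp 2 Mb d Sb = ptp 2 Mb (lift i) Sb"
      if "V i \<in> set ts" "d \<in> eval_trm (reduct TT) vQ (V i)" for i d
      using that wt dcls by fastforce
    have goal: "map (eval_trm M lift) ts \<in> rel M r"
    proof (cases "length ts")
      case 0 then show ?thesis using ds by simp
    next
      case (Suc l)
      show ?thesis
      proof (cases l)
        case 0
        then obtain t d where td: "ts = [t]" "ds = [d]" using Suc ds(1)
          by (metis One_nat_def length_0_conv length_Suc_conv)
        have dt: "d \<in> eval_trm (reduct TT) vQ t" using ds(3) td by auto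
        show ?thesis
        proof (cases t)
          case (C k') then show ?thesis using tmC dt td ds(2) by auto
        next
          case (V i)
          then have h: "i \<le> k" "ptp 2 Mb d Sb = ptp 2 Mb (lift i) Sb" using tmV td dt by auto
          have "holds_atom Mb (\<lambda>_. d) (RelA (Base r) [V 0])" using ds(2) td by simp
          moreover have "wf_atom Sb 0 (RelA (Base r) [V 0])" using r lt td by simp
          ultimately have "holds_atom Mb (\<lambda>_. lift i) (RelA (Base r) [V 0])" using tr2 h(2) by blast
          then show ?thesis using V td by simp
        qed
      next
        case (Suc l')
        then have l2: "length ts = 2" using le2 \<open>length ts = Suc l\<close> by simp
        then obtain t1 t2 d1 d2 where td: "ts = [t1, t2]" "ds = [d1, d2]" using ds(1)
          by (metis (no_types, lifting) One_nat_def Suc_1 length_0_conv length_Suc_conv)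
        have dt: "d1 \<in> eval_trm (reduct TT) vQ t1" "d2 \<in> eval_trm (reduct TT) vQ t2"
          using ds(3) td by auto
        have a2: "arity S r = 2" using lt l2 by simp
        show ?thesis
        proof (cases t1)
          case (C k1)
          note C1 = C
          show ?thesis
          proof (cases t2)
            case (C k2) then show ?thesis using tmC dt td ds(2) C1 by auto
          next
            case (V i)
            then have h: "i \<le> k" "ptp 2 Mb d2 Sb = ptp 2 Mb (lift i) Sb" using tmV td dt by auto
            have d1: "d1 = cst M k1" using tmC dt td C1 by auto
            have k1: "k1 \<in> sconsts S" using wt td C1 by auto
            have "holds_atom Mb (\<lambda>_. d2) (RelA (Base r) [C k1, V 0])" using ds(2) td d1 by simp
            moreover have "wf_atom Sb 0 (RelA (Base r) [C k1, V 0])" using r a2 k1 by simp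
            ultimately have "holds_atom Mb (\<lambda>_. lift i) (RelA (Base r) [C k1, V 0])" using tr2 h(2) by blast
            then show ?thesis using V C1 td by simp
          qed
        next
          case (V i)
          note V1 = V
          have hi: "i \<le> k" "d1 \<in> sdom M" "ptp 2 Mb d1 Sb = ptp 2 Mb (lift i) Sb" using tmV td dt V by auto
          show ?thesis
          proof (cases t2)
            case (C k2)
            have d2: "d2 = cst M k2" using tmC dt td C by auto
            have k2: "k2 \<in> sconsts S" using wt td C by auto
            have "holds_atom Mb (\<lambda>_. d1) (RelA (Base r) [V 0, C k2])" using ds(2) td d2 by simp
            moreover have "wf_atom Sb 0 (RelA (Base r) [V 0, C k2])" using r a2 k2 by simp
            ultimately have "holds_atom Mb (\<lambda>_. lift i) (RelA (Base r) [V 0, C k2])" using tr2 hi(3) by blast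
            then show ?thesis using V1 C td by simp
          next
            case (V p)
            have hp: "p \<le> k" "d2 \<in> sdom M" "ptp 2 Mb d2 Sb = ptp 2 Mb (lift p) Sb" using tmV td dt V by auto
            have LPi: "lift i \<in> sdom M" "lift i \<in> ball S M D (base (root i))" using LP[OF hi(1)] by auto
            have LPp: "lift p \<in> ball S M D (base (root p))" using LP[OF hp(1)] by auto
            have rel1: "rr True d1 d2 \<in> rel M r" using ds(2) td by (simp add: rr_def)
            obtain w where w: "rr True (lift i) w \<in> rel M r" "c w = c d2"
              using exist_step'[OF hi(3)[symmetric] _ r rel1 hi(2)] by auto
            have "c d2 = c (lift p)" using colour_eq'[OF hp(3) _ hp(2)] by simp
            then have cw: "c w = c (lift p)" using w(2) by simp
            have "w \<in> ball S M 1 (lift i)" using rr_ball[OF wf r w(1) LPi(1)] by simp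
            then have wb: "w \<in> ball S M (D + 1) (base (root i))" using ball_trans[OF LPi(2)] by blast
            have "root p = root i"
            proof (cases "i = p")
              case False
              have "(i, p) \<in> A" unfolding A_def using at RelA td V1 V by blast
              then show ?thesis using root_eq by simp
            qed simp
            then have LPp': "lift p \<in> ball S M D (base (root i))" using LPp by simp
            have bs: "base (root i) \<in> sdom M" using base[of "root i"] root_le[of i] hi(1) by simp
            have "w = lift p" using inj_close'[OF bs wb LPp' _ cw] by simp
            then show ?thesis using w(1) V1 V td by (simp add: rr_def)
          qed
        qed
      qed
    qed
    then show ?thesis using RelA by simp
  qed
  show ?thesis
    by (rule ptpI[of _ _ _ _ lift]) (use km wfa lift0 LP hold in auto)
qed

end


theorem lemma19:
  fixes \<Sigma> :: "('r, 'c) sgn" and M :: "('a, 'r, 'c) struct"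
  assumes "finite (rels \<Sigma>)" and "finite (sconsts \<Sigma>)"
    and "binary_sig \<Sigma>"
    and "wf_struct \<Sigma> M"
    and "bounded_degree \<Sigma> M"
  shows "ptp_conservative \<Sigma> M"
proof -
  obtain N where bd: "\<forall>a\<in>sdom M. finite (neighbours \<Sigma> M a) \<and> card (neighbours \<Sigma> M a) \<le> N"
    using assms(5) unfolding bounded_degree_def by blast
  show ?thesis unfolding ptp_conservative_def
  proof
    fix m :: nat
    define D where "D = m*m"
    obtain c where cb: "\<forall>a\<in>sdom M. c a \<le> (N+1)^(2*D+2)"
      and cinj: "\<forall>a\<in>sdom M. \<forall>b\<in>ball \<Sigma> M (2*D+2) a. a \<noteq> b \<longrightarrow> c a \<noteq> c b"
      using colouring_exists[OF assms(4) bd, of "2*D+2"] by blast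
    have col: "is_coloring \<Sigma> M (Kset ((N+1)^(2*D+2))) (mkcol M c)"
      by (rule mkcol_coloring[OF assms(4) cb])
    have cons: "conservative_upto \<Sigma> M (Kset ((N+1)^(2*D+2))) (mkcol M c) (Suc (Suc D)) m"
      unfolding conservative_upto_def
    proof
      fix e assume e: "e \<in> sdom M"
      show "ptp m M e \<Sigma> = ptp m (reduct (quot (Suc (Suc D)) (colsig \<Sigma> (Kset ((N+1)^(2*D+2)))) (mkcol M c)))
          (qmap (Suc (Suc D)) (colsig \<Sigma> (Kset ((N+1)^(2*D+2)))) (mkcol M c) e) \<Sigma>"
      proof
        show "ptp m M e \<Sigma> \<subseteq> ptp m (reduct (quot (Suc (Suc D)) (colsig \<Sigma> (Kset ((N+1)^(2*D+2)))) (mkcol M c)))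
          (qmap (Suc (Suc D)) (colsig \<Sigma> (Kset ((N+1)^(2*D+2)))) (mkcol M c) e) \<Sigma>"
          using fwd[OF assms(4) assms(3) cb cinj e] by blast
      next
        show "ptp m (reduct (quot (Suc (Suc D)) (colsig \<Sigma> (Kset ((N+1)^(2*D+2)))) (mkcol M c)))
          (qmap (Suc (Suc D)) (colsig \<Sigma> (Kset ((N+1)^(2*D+2)))) (mkcol M c) e) \<Sigma> \<subseteq> ptp m M e \<Sigma>"
        proof
          fix p assume p: "p \<in> ptp m (reduct (quot (Suc (Suc D)) (colsig \<Sigma> (Kset ((N+1)^(2*D+2)))) (mkcol M c)))
            (qmap (Suc (Suc D)) (colsig \<Sigma> (Kset ((N+1)^(2*D+2)))) (mkcol M c) e) \<Sigma>"
          obtain k ats where pk: "p = (k, ats)" by (cases p)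
          from p pk obtain vQ where k: "k < m" and wfa: "\<forall>at\<in>set ats. wf_atom \<Sigma> k at"
            and v0: "vQ 0 = qmap (Suc (Suc D)) (colsig \<Sigma> (Kset ((N+1)^(2*D+2)))) (mkcol M c) e"
            and vd: "\<forall>i\<in>{1..k}. vQ i \<in> sdom (reduct (quot (Suc (Suc D)) (colsig \<Sigma> (Kset ((N+1)^(2*D+2)))) (mkcol M c)))"
            and h: "\<forall>at\<in>set ats. holds_atom (reduct (quot (Suc (Suc D)) (colsig \<Sigma> (Kset ((N+1)^(2*D+2)))) (mkcol M c))) vQ at"
            by (blast dest: ptpE)
          show "p \<in> ptp m M e \<Sigma>"
            unfolding pk by (rule bwd[OF assms(4) assms(3) cb cinj e k _ wfa v0 vd h]) (simp add: D_def)
        qed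
      qed
    qed
    show "\<exists>n K Mb. is_coloring \<Sigma> M K Mb \<and> conservative_upto \<Sigma> M K Mb n m"
      using col cons by blast
  qed
qed

end
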